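(* Let $q=3^m$ with $m\ge2$ and $a\in\mathbb{F}_q^*$. Then $H_3(a)=H(a)+1$.
   Context: $\mathbb{F}_q\subset\mathbb{F}_{q^3}$. $\mathrm{Tr}$ is the absolute trace $\mathbb{F}_q\to\mathbb{F}_3$ and $\mathrm{Tr}_{q^3\to q}(x)=x+x^q+x^{q^2}$. With $\omega=e^{2\pi i/3}$, $K(a)=\sum_{x\in\mathbb{F}_q}\omega^{\mathrm{Tr}(x+a/x)}$ and $K_3(a)=\sum_{x\in\mathbb{F}_{q^3}}\omega^{\mathrm{Tr}(\mathrm{Tr}_{q^3\to q}(x+a/x))}$, where $a/x=a\,x^{Q-2}$ in a field of order $Q$. $H(a)$ (resp. $H_3(a)$) is the largest $k$ with $3^k\mid K(a)$ (resp. $3^k\mid K_3(a)$), with the convention $H(a)=m$ if $K(a)=0$ and $H_3(a)=3m$ if $K_3(a)=0$. *)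

theory Defs
  imports Complex_Main
begin

text \<open>The ambient field is a finite field of order Q = q^3 = 3^(3m) (a type 'a);
  F_q is its unique subfield of order q = 3^m, namely the roots of x^q = x.\<close>

definition omega :: complex where
  "omega = cis (2 * pi / 3)"

definition chi3 :: "'a::field \<Rightarrow> complex" where
  "chi3 t = omega ^ (THE k::nat. k < 3 \<and> of_nat k = t)"

definition Fq :: "nat \<Rightarrow> 'a::field set" where
  "Fq m = {x. x ^ (3 ^ m) = x}"

definition abs_tr :: "nat \<Rightarrow> 'a::field \<Rightarrow> 'a" where
  "abs_tr m y = (\<Sum>i<m. y ^ (3 ^ i))"

definition rel_tr :: "nat \<Rightarrow> 'a::field \<Rightarrow> 'a" where
  "rel_tr q x = x + x ^ q + x ^ (q ^ 2)"

text \<open>K(a): sum over F_q, with a/x = a x^(q-2).\<close>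
definition Kl :: "nat \<Rightarrow> 'a::{field,finite} \<Rightarrow> complex" where
  "Kl m a = (\<Sum>x\<in>Fq m. chi3 (abs_tr m (x + a * x ^ (3 ^ m - 2))))"

text \<open>K_3(a): sum over F_{q^3} (the whole type), with a/x = a x^(q^3-2).\<close>
definition Kl3 :: "nat \<Rightarrow> 'a::{field,finite} \<Rightarrow> complex" where
  "Kl3 m a = (\<Sum>x\<in>UNIV. chi3 (abs_tr m (rel_tr (3 ^ m) (x + a * x ^ (3 ^ (3 * m) - 2)))))"

definition pow3_dvd :: "nat \<Rightarrow> complex \<Rightarrow> bool" where
  "pow3_dvd k z \<longleftrightarrow> (\<exists>u v :: int. z = 3 ^ k * (of_int u + of_int v * omega))"

definition H :: "nat \<Rightarrow> 'a::{field,finite} \<Rightarrow> nat" where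
  "H m a = (if Kl m a = 0 then m else (GREATEST k. pow3_dvd k (Kl m a)))"

definition H3 :: "nat \<Rightarrow> 'a::{field,finite} \<Rightarrow> nat" where
  "H3 m a = (if Kl3 m a = 0 then 3 * m else (GREATEST k. pow3_dvd k (Kl3 m a)))"

end

theory Submission
  imports Defs "HOL-Number_Theory.Residues" "HOL-Computational_Algebra.Polynomial"
begin


lemma fermat_field:
  fixes x :: "'a::{field,finite}"
  shows "x ^ card (UNIV :: 'a set) = x"
proof (cases "x = 0")
  case False
  have "x * (\<Prod>y\<in>UNIV-{0}. x * y) = x * x ^ (card (UNIV :: 'a set) - 1) * \<Prod>(UNIV-{0})"
    by (simp add: prod.distrib mult_ac)
  also have "x * x ^ (card (UNIV :: 'a set) - 1) = x ^ Suc (card (UNIV :: 'a set) - 1)"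
    by (subst power_Suc) auto
  also have "Suc (card (UNIV :: 'a set) - 1) = card (UNIV :: 'a set)"
    using finite_UNIV_card_ge_0[where ?'a = 'a] by simp
  also have "(\<Prod>y\<in>UNIV-{0}. x * y) = (\<Prod>y\<in>UNIV-{0}. y)"
    by (rule prod.reindex_bij_witness[of _ "\<lambda>y. y / x" "\<lambda>y. x * y"]) (use False in auto)
  finally show ?thesis
    by simp
qed (use finite_UNIV_card_ge_0[where ?'a = 'a] in auto)

locale kl =
  fixes m :: nat and a :: "'a::{field,finite}"
  assumes cardU: "card (UNIV::'a set) = 3^(3*m)"
    and m2: "2 \<le> m" and aF: "a \<in> Fq m" and anz: "a \<noteq> 0"
begin

abbreviation q :: nat where "q \<equiv> 3^m"

lemma CHAR3: "CHAR('a) = 3"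
proof -
  have pos: "CHAR('a) > 0" by (rule finite_imp_CHAR_pos) simp
  have pr: "prime CHAR('a)" by (rule prime_CHAR_semidom[OF pos])
  have "CHAR('a) dvd 3^(3*m)" using CHAR_dvd_CARD cardU by metis
  then have "CHAR('a) dvd 3" using pr prime_dvd_power by blast
  moreover have "prime (3::nat)" by simp
  ultimately show ?thesis using pr unfolding prime_nat_iff by (metis not_prime_1 pr)
qed

lemma three0: "(3::'a) = 0"
  using of_nat_CHAR[where 'a='a] CHAR3 by simp

lemma frob_add: "(x + y) ^ (3^k) = x^(3^k) + (y::'a)^(3^k)"
  by (rule freshmans_dream') (simp_all add: CHAR3)

lemma frob_sum: "(sum f A)^(3^k) = sum (\<lambda>i. (f i::'a) ^ 3^k) A"
  by (rule freshmans_dream_sum') (simp_all add: CHAR3)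

lemma frob_neg: "(-x)^(3^k) = -((x::'a)^(3^k))"
  by (simp add: power_minus_odd)

lemma frob_diff: "(x - y) ^ (3^k) = x^(3^k) - (y::'a)^(3^k)"
  using frob_add[of x "-y" k] frob_neg[of y k] by simp

lemma fermat: "(x::'a) ^ (q^3) = x"
  using fermat_field[of x] cardU by (simp add: power_mult[symmetric] mult.commute)

end


lemma root_bound:
  fixes r :: "'a::field poly"
  assumes "degree r < n"
  shows "card {x. x^n + poly r x = 0} \<le> n"
proof -
  let ?p = "monom 1 n + r"
  have d: "degree ?p = n"
    using assms by (subst degree_add_eq_left) (simp_all add: degree_monom_eq)
  have nz: "?p \<noteq> 0"
  proof
    assume "?p = 0"
    then have "r = - monom 1 n" by (simp add: eq_neg_iff_add_eq_0 add.commute)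
    then have "degree r = n" by (simp add: degree_monom_eq)
    with assms show False by simp
  qed
  have "{x. x^n + poly r x = 0} = {x. poly ?p x = 0}"
    by (simp add: poly_monom)
  also have "card \<dots> \<le> degree ?p" by (rule card_poly_roots_bound[OF nz])
  finally show ?thesis using d by simp
qed

lemma fiber_card:
  fixes f :: "'b::ab_group_add \<Rightarrow> 'c::ab_group_add"
  assumes add: "\<And>x y. x\<in>S \<Longrightarrow> y\<in>S \<Longrightarrow> f (x+y) = f x + f y"
     and cld: "\<And>x y. x\<in>S \<Longrightarrow> y\<in>S \<Longrightarrow> x - y \<in> S"
     and cla: "\<And>x y. x\<in>S \<Longrightarrow> y\<in>S \<Longrightarrow> x + y \<in> S"
     and x0: "x0 \<in> S"
  shows "card {x\<in>S. f x = f x0} = card {x\<in>S. f x = 0}"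
proof (rule bij_betw_same_card[of "\<lambda>x. x - x0"], rule bij_betw_byWitness[of _ "\<lambda>k. k + x0"])
  have fd: "f (x - x0) = f x - f x0" if "x \<in> S" for x
    using add[of "x - x0" x0] cld[OF that x0] x0 by (simp add: algebra_simps)
  show "\<forall>x\<in>{x \<in> S. f x = f x0}. x - x0 + x0 = x" by simp
  show "\<forall>y\<in>{x \<in> S. f x = 0}. y + x0 - x0 = y" by simp
  show "(\<lambda>x. x - x0) ` {x \<in> S. f x = f x0} \<subseteq> {x \<in> S. f x = 0}"
    using fd cld x0 by auto
  show "(\<lambda>k. k + x0) ` {x \<in> S. f x = 0} \<subseteq> {x \<in> S. f x = f x0}"
    using add cla x0 by auto
qed

lemma card_image_ker:
  fixes f :: "'b::ab_group_add \<Rightarrow> 'c::ab_group_add"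
  assumes fin: "finite S"
     and add: "\<And>x y. x\<in>S \<Longrightarrow> y\<in>S \<Longrightarrow> f (x+y) = f x + f y"
     and cld: "\<And>x y. x\<in>S \<Longrightarrow> y\<in>S \<Longrightarrow> x - y \<in> S"
     and cla: "\<And>x y. x\<in>S \<Longrightarrow> y\<in>S \<Longrightarrow> x + y \<in> S"
  shows "card S = card (f ` S) * card {x\<in>S. f x = 0}"
proof -
  have "card S = (\<Sum>y\<in>f ` S. card {x\<in>S. f x = y})"
    using sum.group[where g=f and h="\<lambda>_. 1::nat", OF fin finite_imageI[OF fin] order_refl]
    by simp
  also have "\<dots> = (\<Sum>y\<in>f ` S. card {x\<in>S. f x = 0})"
  proof (rule sum.cong[OF refl])
    fix y assume "y \<in> f ` S"
    then obtain x0 where "x0 \<in> S" "y = f x0" by auto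
    then show "card {x\<in>S. f x = y} = card {x\<in>S. f x = 0}"
      using fiber_card[OF add cld cla] by blast
  qed
  finally show ?thesis by simp
qed

context kl
begin

lemma Fq_iff: "(x::'a) \<in> Fq m \<longleftrightarrow> x ^ q = x"
  by (simp add: Fq_def)

lemma q_gt: "q \<ge> 9"
proof -
  have "(3::nat)^2 \<le> 3^m" using m2 by (intro power_increasing) auto
  then show ?thesis by simp
qed

lemma F0[simp]: "(0::'a) \<in> Fq m" and F1[simp]: "(1::'a) \<in> Fq m"
  using q_gt by (auto simp: Fq_iff)

lemma Fadd: "(x::'a) \<in> Fq m \<Longrightarrow> y \<in> Fq m \<Longrightarrow> x + y \<in> Fq m"
  unfolding Fq_iff using frob_add[of x y m] by simp
lemma Fneg: "(x::'a) \<in> Fq m \<Longrightarrow> - x \<in> Fq m"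
  unfolding Fq_iff using frob_neg[of x m] by simp
lemma Fdiff: "(x::'a) \<in> Fq m \<Longrightarrow> y \<in> Fq m \<Longrightarrow> x - y \<in> Fq m"
  unfolding Fq_iff using frob_diff[of x y m] by simp
lemma Fmult: "(x::'a) \<in> Fq m \<Longrightarrow> y \<in> Fq m \<Longrightarrow> x * y \<in> Fq m"
  by (simp add: Fq_iff power_mult_distrib)
lemma Finv: "(x::'a) \<in> Fq m \<Longrightarrow> inverse x \<in> Fq m"
  by (simp add: Fq_iff power_inverse)
lemma Fdiv: "(x::'a) \<in> Fq m \<Longrightarrow> y \<in> Fq m \<Longrightarrow> x / y \<in> Fq m"
  by (simp add: divide_inverse Fmult Finv)
lemma Fpow: "(x::'a) \<in> Fq m \<Longrightarrow> x ^ k \<in> Fq m"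
  by (metis Fq_iff power_mult mult.commute)

lemma F_pow_q_pow: "(x::'a) \<in> Fq m \<Longrightarrow> x ^ (q^j) = x"
proof (induction j)
  case (Suc j)
  have "x ^ (q ^ Suc j) = (x ^ (q^j)) ^ q" by (metis power_Suc2 power_mult)
  then show ?case using Suc by (simp add: Fq_iff)
qed simp

lemma Finv_pow: "(x::'a) \<in> Fq m \<Longrightarrow> x \<noteq> 0 \<Longrightarrow> x ^ (q - 2) = inverse x"
proof -
  assume x: "x \<in> Fq m" "x \<noteq> 0"
  have e: "q = (q - 2) + 2" using q_gt by simp
  have "x ^ q = x ^ (q-2) * x^2" by (subst e) (simp only: power_add)
  then have "x ^ (q-2) * x^2 = x" using x by (simp add: Fq_iff)
  then show ?thesis using x by (simp add: field_simps power2_eq_square)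
qed

lemma Q_eq: "3^(3*m) = q^3"
  by (simp add: power_mult[symmetric] mult.commute)

lemma inv_pow_Q: "(x::'a) \<noteq> 0 \<Longrightarrow> x ^ (3^(3*m) - 2) = inverse x"
proof -
  assume x: "x \<noteq> 0"
  have "(3::nat)^1 \<le> 3^(3*m)" using m2 by (intro power_increasing) auto
  then have Q: "q^3 \<ge> (2::nat)" using Q_eq by simp
  have e: "q^3 = (q^3 - 2) + 2" using Q by simp
  have "x ^ (q^3) = x ^ (q^3-2) * x^2" by (subst e) (simp only: power_add)
  then have "x ^ (q^3-2) * x^2 = x" using fermat by simp
  then show ?thesis using x Q_eq by (simp add: field_simps power2_eq_square)
qed

end


lemma cubic_id:
  fixes X x y z :: "'a::comm_ring_1"
  shows "(X - x)*(X - y)*(X - z) = X^3 - (x+y+z)*X^2 + (x*y+y*z+z*x)*X - x*y*z"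
  by (simp add: algebra_simps power2_eq_square power3_eq_cube)

lemma omega3: "omega ^ 3 = 1"
  unfolding omega_def by (simp add: DeMoivre)

lemma omega_Im: "Im omega \<noteq> 0"
proof -
  have "sin (2*pi/3) > 0" by (rule sin_gt_zero) auto
  then show ?thesis unfolding omega_def by simp
qed

lemma omega_ne1: "omega \<noteq> 1"
  using omega_Im by auto

lemma omega_sum: "1 + omega + omega^2 = 0"
proof -
  have "(omega - 1) * (1 + omega + omega^2) = omega^3 - 1"
    by (simp add: algebra_simps power2_eq_square power3_eq_cube)
  then have "(omega - 1) * (1 + omega + omega^2) = 0" using omega3 by simp
  then show ?thesis using omega_ne1 by simp
qed

definition E2 :: "nat \<Rightarrow> 'a::field \<Rightarrow> 'a" where
  "E2 qq x = x * x^qq + x^qq * x^(qq^2) + x^(qq^2) * x"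
definition Nm :: "nat \<Rightarrow> 'a::field \<Rightarrow> 'a" where
  "Nm qq x = x * x^qq * x^(qq^2)"

context kl
begin

lemma q2: "q^2 = 3^(2*m)"
  by (simp add: power_mult[symmetric] mult.commute)

lemma fq1: "((x::'a)^q)^q = x^(q^2)"
  by (simp add: power_mult[symmetric] power2_eq_square)

lemma fq2: "((x::'a)^(q^2))^q = x"
proof -
  have "((x::'a)^(q^2))^q = x^(q^3)"
    by (simp add: power_mult[symmetric] power2_eq_square power3_eq_cube)
  then show ?thesis using fermat by simp
qed

lemma frob_q: "((x::'a) + y)^q = x^q + y^q"
  using frob_add[of x y m] by simp
lemma frob_q2: "((x::'a) + y)^(q^2) = x^(q^2) + y^(q^2)"
  using frob_add[of x y "2*m"] q2 by simp

lemma T_in: "rel_tr q (x::'a) \<in> Fq m"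
  unfolding Fq_iff rel_tr_def by (simp add: frob_q fq1 fq2)

lemma E2_in: "E2 q (x::'a) \<in> Fq m"
  unfolding Fq_iff E2_def by (simp add: frob_q fq1 fq2 power_mult_distrib algebra_simps)

lemma Nm_in: "Nm q (x::'a) \<in> Fq m"
  unfolding Fq_iff Nm_def by (simp add: fq1 fq2 power_mult_distrib algebra_simps)

lemma T_add: "rel_tr q ((x::'a) + y) = rel_tr q x + rel_tr q y"
  unfolding rel_tr_def by (simp add: frob_q frob_q2 algebra_simps)

lemma T_smul: "c \<in> Fq m \<Longrightarrow> rel_tr q ((c::'a) * x) = c * rel_tr q x"
  unfolding rel_tr_def using F_pow_q_pow[of c 1] F_pow_q_pow[of c 2]
  by (simp add: power_mult_distrib algebra_simps)

lemma Nm_nz: "(x::'a) \<noteq> 0 \<Longrightarrow> Nm q x \<noteq> 0"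
  by (simp add: Nm_def)

lemma T_inv: "(x::'a) \<noteq> 0 \<Longrightarrow> rel_tr q (inverse x) = E2 q x / Nm q x"
  unfolding rel_tr_def E2_def Nm_def
  by (simp add: power_inverse field_simps)

lemma char_poly: "(X - (x::'a))*(X - x^q)*(X - x^(q^2)) = X^3 - rel_tr q x * X^2 + E2 q x * X - Nm q x"
  unfolding rel_tr_def E2_def Nm_def by (rule cubic_id)

lemma two_nz: "(2::'a) \<noteq> 0"
proof
  assume "(2::'a) = 0"
  then have "(of_nat 2::'a) = 0" by simp
  then have "CHAR('a) dvd 2" by (simp only: of_nat_eq_0_iff_char_dvd)
  then show False using CHAR3 by simp
qed

lemma neg1_eq2: "(-1::'a) = 2"
  using three0 by (simp add: eq_neg_iff_add_eq_0)

lemma one_ne_neg1: "(1::'a) \<noteq> -1"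
  using two_nz by (simp add: eq_neg_iff_add_eq_0)

lemma card_Fq_le: "card (Fq m :: 'a set) \<le> q"
proof -
  have "(Fq m :: 'a set) = {x. x^q + poly [:0,-1:] x = 0}"
    by (auto simp: Fq_iff)
  also have "card \<dots> \<le> q" using q_gt by (intro root_bound) auto
  finally show ?thesis .
qed

lemma card_kerT: "card {x::'a. rel_tr q x = 0} \<le> q^2"
proof -
  have "{x::'a. rel_tr q x = 0} = {x. x^(q^2) + poly (monom 1 q + [:0,1:]) x = 0}"
    by (auto simp: rel_tr_def poly_monom algebra_simps)
  also have "card \<dots> \<le> q^2"
  proof (intro root_bound)
    have "degree (monom (1::'a) q + [:0,1:]) = q"
      using q_gt by (subst degree_add_eq_left) (auto simp: degree_monom_eq)
    moreover have "q < q^2" using q_gt by (simp add: power2_eq_square)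
    ultimately show "degree (monom (1::'a) q + [:0,1:]) < q^2" by simp
  qed
  finally show ?thesis .
qed

lemma card_Fq: "card (Fq m :: 'a set) = q"
proof -
  have "card (UNIV::'a set) = card (range (rel_tr q) :: 'a set) * card {x::'a. rel_tr q x = 0}"
    using card_image_ker[of "UNIV::'a set" "rel_tr q"] by (simp add: T_add)
  then have "q^3 \<le> card (range (rel_tr q) :: 'a set) * q^2"
    using card_kerT cardU Q_eq by (metis mult_le_mono2)
  then have "q \<le> card (range (rel_tr q) :: 'a set)"
    using q_gt by (simp add: power2_eq_square power3_eq_cube)
  also have "\<dots> \<le> card (Fq m :: 'a set)"
    by (intro card_mono) (auto simp: T_in)
  finally show ?thesis using card_Fq_le by simp
qed

lemma finite_F: "finite (Fq m :: 'a set)" by simp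

end


lemma deg_bound: "degree (\<Sum>i<k. monom (1::'a::field) (3^i)) < 3^k"
proof (induction k)
  case 0 then show ?case by simp
next
  case (Suc k)
  have "degree (\<Sum>i<Suc k. monom (1::'a) (3^i)) \<le> max (degree (\<Sum>i<k. monom (1::'a) (3^i))) (degree (monom (1::'a) (3^k)))"
    by (simp add: degree_add_le_max)
  also have "\<dots> \<le> 3^k" using Suc by (simp add: degree_monom_eq)
  also have "\<dots> < 3^Suc k" by simp
  finally show ?case .
qed

context kl
begin

lemma tr_add: "abs_tr m ((x::'a) + y) = abs_tr m x + abs_tr m y"
  unfolding abs_tr_def by (simp add: frob_add sum.distrib)

lemma tr_neg: "abs_tr m (-(x::'a)) = - abs_tr m x"
  unfolding abs_tr_def by (simp add: frob_neg sum_negf)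

lemma tr_zero: "abs_tr m (0::'a) = 0"
  unfolding abs_tr_def by (simp add: power_0_left)

lemma tr_cube: "(y::'a) \<in> Fq m \<Longrightarrow> (abs_tr m y)^3 = abs_tr m y"
proof -
  assume y: "y \<in> Fq m"
  have "(abs_tr m y)^(3^1) = (\<Sum>i<m. (y^(3^i))^(3^1))"
    unfolding abs_tr_def by (rule frob_sum)
  also have "\<dots> = (\<Sum>i<m. y^(3^(Suc i)))"
    by (simp add: power_mult[symmetric] mult.commute)
  also have "\<dots> = abs_tr m y"
  proof -
    have A: "(\<Sum>i<Suc m. y^(3^i)) = y + (\<Sum>i<m. y^(3^Suc i))"
      by (subst sum.lessThan_Suc_shift) simp
    have B: "(\<Sum>i<Suc m. y^(3^i)) = (\<Sum>i<m. y^(3^i)) + y"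
      using y by (simp add: Fq_iff)
    show ?thesis using A B unfolding abs_tr_def by (simp add: add.commute)
  qed
  finally show ?thesis by simp
qed

lemma cube_cases: "(z::'a)^3 = z \<Longrightarrow> z = 0 \<or> z = 1 \<or> z = -1"
proof -
  assume "z^3 = z"
  then have "z * (z - 1) * (z + 1) = 0"
    by (simp add: algebra_simps power3_eq_cube)
  then show ?thesis by (auto simp: eq_neg_iff_add_eq_0 add.commute)
qed

lemma tr_vals: "(y::'a) \<in> Fq m \<Longrightarrow> abs_tr m y \<in> {0, 1, -1}"
  using cube_cases tr_cube by blast

lemma smul3: "(c::'a)^3 = c \<Longrightarrow> c^(3^i) = c"
proof (induction i)
  case (Suc i)
  have "c^(3^Suc i) = (c^(3^i))^3" by (simp add: power_mult[symmetric] mult.commute)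
  then show ?case using Suc by simp
qed simp

lemma tr_smul: "(c::'a)^3 = c \<Longrightarrow> abs_tr m (c * y) = c * abs_tr m y"
  unfolding abs_tr_def by (simp add: power_mult_distrib smul3 sum_distrib_left)

lemma card_ker_tr: "card {x\<in>(Fq m::'a set). abs_tr m x = 0} \<le> 3^(m-1)"
proof -
  have mm: "m = Suc (m-1)" using m2 by simp
  have "{x\<in>(Fq m::'a set). abs_tr m x = 0} \<subseteq> {x. x^(3^(m-1)) + poly (\<Sum>i<m-1. monom (1::'a) (3^i)) x = 0}"
  proof
    fix x assume "x \<in> {x\<in>(Fq m::'a set). abs_tr m x = 0}"
    then have "(\<Sum>i<Suc (m-1). x^(3^i)) = 0" using mm by (simp add: abs_tr_def)
    then show "x \<in> {x. x^(3^(m-1)) + poly (\<Sum>i<m-1. monom (1::'a) (3^i)) x = 0}"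
      by (simp add: poly_sum poly_monom add.commute)
  qed
  then have "card {x\<in>(Fq m::'a set). abs_tr m x = 0} \<le> card {x. x^(3^(m-1)) + poly (\<Sum>i<m-1. monom (1::'a) (3^i)) x = 0}"
    by (intro card_mono) auto
  also have "\<dots> \<le> 3^(m-1)" by (intro root_bound deg_bound)
  finally show ?thesis .
qed

lemma card_vals: "card {0::'a, 1, -1} = 3"
  using one_ne_neg1 by auto

lemma tr_image: "abs_tr m ` (Fq m :: 'a set) = {0, 1, -1}"
  and card_ker_tr_eq: "card {x\<in>(Fq m::'a set). abs_tr m x = 0} = 3^(m-1)"
proof -
  have e: "card (Fq m::'a set) = card (abs_tr m ` (Fq m :: 'a set)) * card {x\<in>(Fq m::'a set). abs_tr m x = 0}"
    by (rule card_image_ker) (auto simp: tr_add Fadd Fdiff)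
  have sub: "abs_tr m ` (Fq m :: 'a set) \<subseteq> {0, 1, -1}" using tr_vals by auto
  have c3: "card (abs_tr m ` (Fq m :: 'a set)) \<le> 3"
    using card_mono[OF _ sub] card_vals by simp
  have mm: "(3::nat)^m = 3 * 3^(m-1)" using m2 by (metis Suc_diff_1 le_trans one_le_numeral power_Suc zero_less_Suc
        less_le_trans numeral_2_eq_2 not_less_eq_eq)
  have "3 * 3^(m-1) = card (abs_tr m ` (Fq m :: 'a set)) * card {x\<in>(Fq m::'a set). abs_tr m x = 0}"
    using e card_Fq mm by simp
  moreover have "card (abs_tr m ` (Fq m :: 'a set)) * card {x\<in>(Fq m::'a set). abs_tr m x = 0}
     \<le> card (abs_tr m ` (Fq m :: 'a set)) * 3^(m-1)"
    using card_ker_tr by (rule mult_le_mono2)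
  ultimately have "3 * 3^(m-1) \<le> card (abs_tr m ` (Fq m :: 'a set)) * (3::nat)^(m-1)" by simp
  then have "3 \<le> card (abs_tr m ` (Fq m :: 'a set))" by simp
  then have c3': "card (abs_tr m ` (Fq m :: 'a set)) = 3" using c3 by simp
  have ck: "card {x\<in>(Fq m::'a set). abs_tr m x = 0} = 3^(m-1)"
    using \<open>3 * 3^(m-1) = _\<close> c3' by simp
  show "abs_tr m ` (Fq m :: 'a set) = {0, 1, -1}"
    using card_subset_eq[OF _ sub] c3' card_vals by simp
  show "card {x\<in>(Fq m::'a set). abs_tr m x = 0} = 3^(m-1)" by (rule ck)
qed

lemma tr_fiber: "s \<in> {0::'a,1,-1} \<Longrightarrow> card {x\<in>(Fq m::'a set). abs_tr m x = s} = 3^(m-1)"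
proof -
  assume "s \<in> {0::'a,1,-1}"
  then obtain x0 where x0: "x0 \<in> Fq m" "abs_tr m x0 = s" using tr_image by (metis imageE)
  have "card {x\<in>(Fq m::'a set). abs_tr m x = abs_tr m x0} = card {x\<in>(Fq m::'a set). abs_tr m x = 0}"
    by (rule fiber_card) (auto simp: tr_add Fadd Fdiff x0)
  then show ?thesis using x0 card_ker_tr_eq by simp
qed

end


definition psi :: "nat \<Rightarrow> 'a::field \<Rightarrow> complex" where
  "psi mm y = chi3 (abs_tr mm y)"

context kl
begin

lemma of_nat_small: "k < 3 \<Longrightarrow> j < 3 \<Longrightarrow> (of_nat k :: 'a) = of_nat j \<Longrightarrow> k = j"
  using of_nat_eq_iff_cong_CHAR[where 'a='a] CHAR3 cong_less_modulus_unique_nat by metis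

lemma chi3_of_nat: "k < 3 \<Longrightarrow> chi3 (of_nat k :: 'a) = omega ^ k"
  unfolding chi3_def
  by (rule arg_cong[where f="\<lambda>j. omega ^ j"], rule the_equality) (auto intro: of_nat_small)

lemma chi3_0: "chi3 (0::'a) = 1"
  using chi3_of_nat[of 0] by simp
lemma chi3_1: "chi3 (1::'a) = omega"
  using chi3_of_nat[of 1] by simp
lemma chi3_m1: "chi3 (-1::'a) = omega^2"
proof -
  have "chi3 (of_nat 2::'a) = omega^2" by (rule chi3_of_nat) simp
  then show ?thesis by (simp only: neg1_eq2 of_nat_numeral)
qed

lemma omega4: "omega^4 = omega"
  using omega3 by (metis power_Suc2 numeral_eq_Suc pred_numeral_simps(2) semiring_norm(26,27) mult_1)

lemma chi3_add: "s \<in> {0::'a,1,-1} \<Longrightarrow> t \<in> {0::'a,1,-1} \<Longrightarrow> chi3 (s + t) = chi3 s * chi3 t"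
proof -
  assume s: "s \<in> {0::'a,1,-1}" and t: "t \<in> {0::'a,1,-1}"
  have a: "(1::'a) + 1 = -1" using neg1_eq2 by simp
  have b: "(-1::'a) + -1 = 1" using three0 by (metis a add.inverse_inverse minus_add_distrib)
  have o2: "omega * omega = omega^2" by (simp add: power2_eq_square)
  have o3: "omega * omega^2 = 1" using omega3 by (simp add: power2_eq_square power3_eq_cube mult.assoc)
  have o4: "omega^2 * omega^2 = omega" using omega4 by (simp add: power_add[symmetric])
  have c2: "chi3 (2::'a) = omega^2" using chi3_m1 neg1_eq2 by simp
  have c4: "chi3 (-2::'a) = omega" using chi3_1 neg1_eq2
    by (metis add.inverse_inverse)
  from s t show ?thesis
    by (auto simp: chi3_0 chi3_1 chi3_m1 a b o2 o3 o4 c2 c4 omega4 mult.commute)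
qed

lemma psi_add: "(x::'a) \<in> Fq m \<Longrightarrow> y \<in> Fq m \<Longrightarrow> psi m (x + y) = psi m x * psi m y"
  unfolding psi_def tr_add by (rule chi3_add[OF tr_vals tr_vals])

lemma psi_0: "psi m (0::'a) = 1"
  unfolding psi_def by (simp add: tr_zero chi3_0)

lemma sum_psi: "(\<Sum>y\<in>(Fq m::'a set). psi m y) = 0"
proof -
  have "(\<Sum>y\<in>(Fq m::'a set). psi m y) = (\<Sum>s\<in>{0::'a,1,-1}. \<Sum>y\<in>{x\<in>Fq m. abs_tr m x = s}. psi m y)"
    by (rule sum.group[symmetric, OF finite_F]) (use tr_vals in auto)
  also have "\<dots> = (\<Sum>s\<in>{0::'a,1,-1}. of_nat (3^(m-1)) * chi3 s)"
  proof (rule sum.cong[OF refl])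
    fix s assume s: "s \<in> {0::'a,1,-1}"
    have "(\<Sum>y\<in>{x\<in>Fq m. abs_tr m x = s}. psi m y) = (\<Sum>y\<in>{x\<in>Fq m. abs_tr m x = s}. chi3 s)"
      by (rule sum.cong) (auto simp: psi_def)
    then show "(\<Sum>y\<in>{x\<in>Fq m. abs_tr m x = s}. psi m y) = of_nat (3^(m-1)) * chi3 s"
      using tr_fiber[OF s] by simp
  qed
  also have "\<dots> = of_nat (3^(m-1)) * (1 + omega + omega^2)"
    using one_ne_neg1 by (simp add: chi3_0 chi3_1 chi3_m1 algebra_simps)
  also have "\<dots> = 0" by (simp add: omega_sum)
  finally show ?thesis .
qed

lemma sum_psi_c: "c \<in> Fq m \<Longrightarrow> (c::'a) \<noteq> 0 \<Longrightarrow> (\<Sum>y\<in>(Fq m::'a set). psi m (c * y)) = 0"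
proof -
  assume c: "c \<in> Fq m" "c \<noteq> 0"
  have "(\<Sum>y\<in>(Fq m::'a set). psi m (c * y)) = (\<Sum>y\<in>(Fq m::'a set). psi m y)"
    by (rule sum.reindex_bij_witness[of _ "\<lambda>y. y / c" "\<lambda>y. c * y"]) (use c in \<open>auto simp: Fmult Fdiv\<close>)
  then show ?thesis using sum_psi by simp
qed

lemma sum_psi_c_nz: "c \<in> Fq m \<Longrightarrow> (c::'a) \<noteq> 0 \<Longrightarrow> (\<Sum>y\<in>(Fq m::'a set)-{0}. psi m (c * y)) = -1"
proof -
  assume c: "c \<in> Fq m" "c \<noteq> 0"
  have "(\<Sum>y\<in>(Fq m::'a set). psi m (c * y)) = psi m (c * 0) + (\<Sum>y\<in>(Fq m::'a set)-{0}. psi m (c * y))"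
    by (rule sum.remove) auto
  then show ?thesis using sum_psi_c[OF c] psi_0 by (simp add: eq_neg_iff_add_eq_0 add.commute)
qed

lemma sum_psi_nz: "(\<Sum>y\<in>(Fq m::'a set)-{0}. psi m y) = -1"
  using sum_psi_c_nz[of 1] by simp

end


context kl
begin

definition Fs :: "'a set" where "Fs = Fq m - {0}"
definition D :: "('a \<times> 'a \<times> 'a) set" where "D = Fq m \<times> Fq m \<times> Fs"
definition Lam :: "'a \<times> 'a \<times> 'a \<Rightarrow> complex" where
  "Lam w = (case w of (u,e,n) \<Rightarrow> psi m (u + a * (e / n)))"
definition fw :: "'a \<times> 'a \<times> 'a \<Rightarrow> 'a \<Rightarrow> 'a" where
  "fw w X = (case w of (u,e,n) \<Rightarrow> X^3 - u*X^2 + e*X - n)"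
definition sig :: "'a \<times> 'a \<times> 'a \<Rightarrow> 'a \<times> 'a \<times> 'a" where
  "sig p = (case p of (x,y,z) \<Rightarrow> (x+y+z, x*y+y*z+z*x, x*y*z))"
definition tau :: "'a \<Rightarrow> 'a \<times> 'a \<times> 'a" where
  "tau t = (rel_tr q t, E2 q t, Nm q t)"
definition Kstd :: complex where
  "Kstd = (\<Sum>x\<in>Fs. psi m (x + a * inverse x))"
definition Kstd3 :: complex where
  "Kstd3 = (\<Sum>t\<in>UNIV-{0::'a}. psi m (rel_tr q t + a * rel_tr q (inverse t)))"
definition Sc :: "'a \<times> 'a \<times> 'a \<Rightarrow> nat" where "Sc w = card {p\<in>Fs\<times>Fs\<times>Fs. sig p = w}"
definition Bc :: "'a \<times> 'a \<times> 'a \<Rightarrow> nat" where "Bc w = card {t\<in>UNIV-{0::'a}. tau t = w}"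
definition Rc :: "'a \<times> 'a \<times> 'a \<Rightarrow> nat" where "Rc w = card {r\<in>Fq m. fw w r = 0}"

lemma Fs_iff: "x \<in> Fs \<longleftrightarrow> x \<in> Fq m \<and> x \<noteq> 0" by (simp add: Fs_def)

lemma finite_D: "finite D" by simp

lemma psi3: "x \<in> Fs \<Longrightarrow> y \<in> Fs \<Longrightarrow> z \<in> Fs \<Longrightarrow>
  psi m (x + a * inverse x) * (psi m (y + a * inverse y) * psi m (z + a * inverse z)) = Lam (sig (x,y,z))"
proof -
  assume xyz: "x \<in> Fs" "y \<in> Fs" "z \<in> Fs"
  have inF: "w + a * inverse w \<in> Fq m" if "w \<in> Fs" for w
    using that aF by (auto simp: Fs_iff intro!: Fadd Fmult Finv)
  have "psi m (x + a * inverse x) * (psi m (y + a * inverse y) * psi m (z + a * inverse z))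
     = psi m ((x + a * inverse x) + ((y + a * inverse y) + (z + a * inverse z)))"
    using xyz inF by (simp add: psi_add Fadd)
  also have "(x + a * inverse x) + ((y + a * inverse y) + (z + a * inverse z))
      = (x+y+z) + a * ((x*y+y*z+z*x) / (x*y*z))"
    using xyz by (simp add: Fs_iff field_simps)
  finally show ?thesis by (simp add: Lam_def sig_def)
qed

lemma sig_D: "p \<in> Fs\<times>Fs\<times>Fs \<Longrightarrow> sig p \<in> D"
  by (auto simp: sig_def D_def Fs_iff intro!: Fadd Fmult)

lemma tau_D: "t \<noteq> 0 \<Longrightarrow> tau t \<in> D"
  by (auto simp: tau_def D_def Fs_iff T_in E2_in Nm_in Nm_nz)

lemma stepA: "Kstd^3 = (\<Sum>p\<in>Fs\<times>Fs\<times>Fs. Lam (sig p))"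
proof -
  let ?g = "\<lambda>x. psi m (x + a * inverse x)"
  have "Kstd^3 = (\<Sum>x\<in>Fs. ?g x) * ((\<Sum>y\<in>Fs. ?g y) * (\<Sum>z\<in>Fs. ?g z))"
    by (simp add: Kstd_def power3_eq_cube)
  also have "\<dots> = (\<Sum>x\<in>Fs. \<Sum>y\<in>Fs. \<Sum>z\<in>Fs. ?g x * (?g y * ?g z))"
  proof -
    have e1: "(\<Sum>y\<in>Fs. ?g y) * (\<Sum>z\<in>Fs. ?g z) = (\<Sum>y\<in>Fs. \<Sum>z\<in>Fs. ?g y * ?g z)" by (rule sum_product)
    have e2: "(\<Sum>x\<in>Fs. ?g x) * (\<Sum>y\<in>Fs. \<Sum>z\<in>Fs. ?g y * ?g z) = (\<Sum>x\<in>Fs. \<Sum>y\<in>Fs. ?g x * (\<Sum>z\<in>Fs. ?g y * ?g z))" by (rule sum_product)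
    have e3: "\<And>x y. ?g x * (\<Sum>z\<in>Fs. ?g y * ?g z) = (\<Sum>z\<in>Fs. ?g x * (?g y * ?g z))" by (rule sum_distrib_left)
    show ?thesis unfolding e1 e2 e3 ..
  qed
  also have "\<dots> = (\<Sum>x\<in>Fs. \<Sum>y\<in>Fs. \<Sum>z\<in>Fs. Lam (sig (x,y,z)))"
    by (intro sum.cong refl) (simp add: psi3)
  also have "\<dots> = (\<Sum>p\<in>Fs\<times>Fs\<times>Fs. Lam (sig p))"
    by (simp add: sum.cartesian_product)
  finally show ?thesis .
qed

lemma stepB: "(\<Sum>p\<in>Fs\<times>Fs\<times>Fs. Lam (sig p)) = (\<Sum>w\<in>D. of_nat (Sc w) * Lam w)"
proof -
  have "(\<Sum>p\<in>Fs\<times>Fs\<times>Fs. Lam (sig p)) = (\<Sum>w\<in>D. \<Sum>p\<in>{p\<in>Fs\<times>Fs\<times>Fs. sig p = w}. Lam (sig p))"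
    by (rule sum.group[symmetric]) (auto simp: sig_D)
  also have "\<dots> = (\<Sum>w\<in>D. of_nat (Sc w) * Lam w)"
    by (intro sum.cong refl) (simp add: Sc_def)
  finally show ?thesis .
qed

lemma stepC: "Kstd3 = (\<Sum>w\<in>D. of_nat (Bc w) * Lam w)"
proof -
  have "Kstd3 = (\<Sum>t\<in>UNIV-{0::'a}. Lam (tau t))"
    unfolding Kstd3_def
    by (intro sum.cong refl) (auto simp: Lam_def tau_def T_inv)
  also have "\<dots> = (\<Sum>w\<in>D. \<Sum>t\<in>{t\<in>UNIV-{0::'a}. tau t = w}. Lam (tau t))"
    by (rule sum.group[symmetric]) (simp_all add: image_subset_iff tau_D)
  also have "\<dots> = (\<Sum>w\<in>D. of_nat (Bc w) * Lam w)"
    by (intro sum.cong refl) (simp add: Bc_def)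
  finally show ?thesis .
qed

lemma stepE: "(\<Sum>w\<in>D. Lam w) = 0"
proof -
  let ?G = "\<lambda>p. psi m (a * (fst p / snd p))"
  have "(\<Sum>w\<in>D. Lam w) = (\<Sum>w\<in>(Fq m::'a set) \<times> (Fq m \<times> Fs). psi m (fst w) * ?G (snd w))"
    unfolding D_def by (rule sum.cong[OF refl]) (auto simp: Lam_def psi_add Fs_iff aF Fmult Fdiv)
  also have "\<dots> = (\<Sum>u\<in>(Fq m::'a set). \<Sum>p\<in>Fq m \<times> Fs. psi m u * ?G p)"
    by (simp add: sum.cartesian_product')
  also have "\<dots> = (\<Sum>u\<in>(Fq m::'a set). psi m u) * (\<Sum>p\<in>Fq m \<times> Fs. ?G p)"
    by (simp add: sum_product)
  also have "\<dots> = 0" by (simp add: sum_psi)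
  finally show ?thesis .
qed

end


context kl
begin

lemma Hsum0: "(\<Sum>n\<in>Fs. psi m ((0::'a) * inverse n)) = of_nat q - 1"
proof -
  have "card Fs = q - 1" using card_Fq by (simp add: Fs_def card_Diff_singleton)
  then show ?thesis using psi_0 q_gt by (simp add: of_nat_diff)
qed

lemma Hsum: "c \<in> Fq m \<Longrightarrow> (c::'a) \<noteq> 0 \<Longrightarrow> (\<Sum>n\<in>Fs. psi m (c * inverse n)) = -1"
proof -
  assume c: "c \<in> Fq m" "c \<noteq> 0"
  have "(\<Sum>n\<in>Fs. psi m (c * inverse n)) = (\<Sum>n\<in>Fs. psi m (c * n))"
    by (rule sum.reindex_bij_witness[of _ inverse inverse]) (auto simp: Fs_iff Finv)
  then show ?thesis using sum_psi_c_nz[OF c] by (simp add: Fs_def)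
qed

lemma G_nz:
  assumes r: "r \<in> Fs"
  shows "(\<Sum>w\<in>{w\<in>D. fw w r = 0}. Lam w) = of_nat q * psi m (r + a * inverse r)"
proof -
  have r0: "r \<noteq> 0" and rF: "r \<in> Fq m" using r by (auto simp: Fs_iff)
  let ?E = "\<lambda>u n. (n - r^3 + u*r^2) / r"
  have "(\<Sum>w\<in>{w\<in>D. fw w r = 0}. Lam w) = (\<Sum>p\<in>(Fq m::'a set) \<times> Fs. Lam (fst p, ?E (fst p) (snd p), snd p))"
  proof (rule sum.reindex_bij_witness[of _ "\<lambda>p. (fst p, ?E (fst p) (snd p), snd p)" "\<lambda>w. (fst w, snd (snd w))"])
    fix p assume p: "p \<in> (Fq m::'a set) \<times> Fs"
    show "(fst (fst p, ?E (fst p) (snd p), snd p), snd (snd (fst p, ?E (fst p) (snd p), snd p))) = p" by simp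
    have "?E (fst p) (snd p) \<in> Fq m" using p rF by (auto simp: Fs_iff intro!: Fdiv Fadd Fdiff Fmult Fpow)
    moreover have "fw (fst p, ?E (fst p) (snd p), snd p) r = 0" using r0
      by (simp add: fw_def field_simps power2_eq_square power3_eq_cube)
    ultimately show "(fst p, ?E (fst p) (snd p), snd p) \<in> {w\<in>D. fw w r = 0}" using p by (auto simp: D_def)
  next
    fix w assume w: "w \<in> {w\<in>D. fw w r = 0}"
    then show "(fst w, snd (snd w)) \<in> (Fq m::'a set) \<times> Fs" by (auto simp: D_def)
    obtain u e n where wd: "w = (u,e,n)" by (cases w) auto
    have "r^3 - u*r^2 + e*r - n = 0" using w wd by (simp add: fw_def)
    then have "e = ?E u n" using r0 by (simp add: field_simps power2_eq_square power3_eq_cube)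
    then show "(fst (fst w, snd (snd w)), ?E (fst (fst w, snd (snd w))) (snd (fst w, snd (snd w))), snd (fst w, snd (snd w))) = w"
      using wd by simp
    show "Lam (fst (fst w, snd (snd w)), ?E (fst (fst w, snd (snd w))) (snd (fst w, snd (snd w))), snd (fst w, snd (snd w))) = Lam w"
      using wd \<open>e = ?E u n\<close> by simp
  qed
  also have "\<dots> = (\<Sum>p\<in>(Fq m::'a set) \<times> Fs. psi m (r + a * inverse r) * (psi m (fst p - r) * psi m ((a*r*(fst p - r)) * inverse (snd p))))"
  proof (rule sum.cong[OF refl])
    fix p assume p: "p \<in> (Fq m::'a set) \<times> Fs"
    obtain u n where pd: "p = (u,n)" by (cases p) auto
    have uF: "u \<in> Fq m" and nF: "n \<in> Fq m" and n0: "n \<noteq> 0" using p pd by (auto simp: Fs_iff)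
    have eq: "u + a * (?E u n / n) = (r + a * inverse r) + ((u - r) + (a*r*(u - r)) * inverse n)"
      using r0 n0 by (simp add: field_simps power2_eq_square power3_eq_cube)
    have m1: "r + a * inverse r \<in> Fq m" using rF aF by (intro Fadd Fmult Finv)
    have m2: "u - r \<in> Fq m" using uF rF by (rule Fdiff)
    have m3: "(a*r*(u - r)) * inverse n \<in> Fq m" using uF rF aF nF by (intro Fmult Fdiff Finv)
    show "Lam (fst p, ?E (fst p) (snd p), snd p) = psi m (r + a * inverse r) * (psi m (fst p - r) * psi m ((a*r*(fst p - r)) * inverse (snd p)))"
    proof -
      have "Lam (fst p, ?E (fst p) (snd p), snd p) = psi m (u + a * (?E u n / n))"
        by (simp add: Lam_def pd)
      also have "\<dots> = psi m ((r + a * inverse r) + ((u - r) + (a*r*(u - r)) * inverse n))"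
        by (subst eq) (rule refl)
      also have "\<dots> = psi m (r + a * inverse r) * (psi m (u - r) * psi m ((a*r*(u - r)) * inverse n))"
        by (simp only: psi_add[OF m1 Fadd[OF m2 m3]] psi_add[OF m2 m3])
      finally show ?thesis by (simp add: pd)
    qed
  qed
  also have "\<dots> = psi m (r + a * inverse r) * (\<Sum>u\<in>(Fq m::'a set). psi m (u - r) * (\<Sum>n\<in>Fs. psi m ((a*r*(u - r)) * inverse n)))"
    by (simp add: sum.cartesian_product' sum_distrib_left)
  also have "(\<Sum>u\<in>(Fq m::'a set). psi m (u - r) * (\<Sum>n\<in>Fs. psi m ((a*r*(u - r)) * inverse n)))
     = (\<Sum>w\<in>(Fq m::'a set). psi m w * (\<Sum>n\<in>Fs. psi m ((a*r*w) * inverse n)))"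
    by (rule sum.reindex_bij_witness[of _ "\<lambda>w. w + r" "\<lambda>u. u - r"]) (auto simp: rF Fadd Fdiff)
  also have "\<dots> = psi m (0::'a) * (\<Sum>n\<in>Fs. psi m ((a*r*0) * inverse n)) + (\<Sum>w\<in>Fs. psi m w * (\<Sum>n\<in>Fs. psi m ((a*r*w) * inverse n)))"
    unfolding Fs_def
    by (rule sum.remove[where x="0::'a" and A="Fq m" and g="\<lambda>w. psi m w * (\<Sum>n\<in>Fq m - {0}. psi m ((a*r*w) * inverse n))"]) auto
  also have "(\<Sum>w\<in>Fs. psi m w * (\<Sum>n\<in>Fs. psi m ((a*r*w) * inverse n))) = (\<Sum>w\<in>Fs. - psi m w)"
  proof (rule sum.cong[OF refl])
    fix w assume w: "w \<in> Fs"
    have "a*r*w \<in> Fq m" "a*r*w \<noteq> 0" using w aF anz rF r0 by (auto simp: Fs_iff intro!: Fmult)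
    then show "psi m w * (\<Sum>n\<in>Fs. psi m ((a*r*w) * inverse n)) = - psi m w" using Hsum by simp
  qed
  also have "(\<Sum>w\<in>Fs. - psi m w) = 1"
    using sum_psi_nz by (simp add: sum_negf Fs_def)
  finally show ?thesis using Hsum0 psi_0 by simp
qed

lemma G_0: "{w\<in>D. fw w 0 = 0} = {}"
  by (auto simp: D_def fw_def Fs_iff)

lemma stepD: "(\<Sum>w\<in>D. of_nat (Rc w) * Lam w) = of_nat q * Kstd"
proof -
  have "(\<Sum>w\<in>D. of_nat (Rc w) * Lam w) = (\<Sum>w\<in>D. \<Sum>r\<in>{r\<in>Fq m. fw w r = 0}. Lam w)"
    by (simp add: Rc_def)
  also have "\<dots> = (\<Sum>r\<in>Fq m. \<Sum>w\<in>{w\<in>D. fw w r = 0}. Lam w)"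
    by (rule sum.swap_restrict) auto
  also have "\<dots> = (\<Sum>w\<in>{w\<in>D. fw w 0 = 0}. Lam w) + (\<Sum>r\<in>Fs. \<Sum>w\<in>{w\<in>D. fw w r = 0}. Lam w)"
    unfolding Fs_def
    by (rule sum.remove[where x="0::'a" and A="Fq m" and g="\<lambda>r. \<Sum>w\<in>{w\<in>D. fw w r = 0}. Lam w"]) auto
  also have "\<dots> = (\<Sum>r\<in>Fs. of_nat q * psi m (r + a * inverse r))"
    by (simp add: G_0 G_nz)
  also have "\<dots> = of_nat q * Kstd" by (simp add: Kstd_def sum_distrib_left)
  finally show ?thesis .
qed

end


lemma card3_le: "card {x, y, z} \<le> 3"
  by (simp add: card_insert_if)

context kl
begin

lemma card_Fs: "card Fs = q - 1"
  using card_Fq by (simp add: Fs_def card_Diff_singleton)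

lemma finite_Fs: "finite Fs" by simp

lemma sum_Sc: "(\<Sum>w\<in>D. Sc w) = (q-1)^3"
proof -
  have "(\<Sum>w\<in>D. Sc w) = (\<Sum>w\<in>D. \<Sum>p\<in>{p\<in>Fs\<times>Fs\<times>Fs. sig p = w}. 1)"
    by (simp add: Sc_def)
  also have "\<dots> = (\<Sum>p\<in>Fs\<times>Fs\<times>Fs. 1)"
    by (rule sum.group) (auto simp: sig_D)
  also have "\<dots> = (q-1)^3" by (simp add: card_cartesian_product card_Fs power3_eq_cube)
  finally show ?thesis .
qed

lemma sum_Bc: "(\<Sum>w\<in>D. Bc w) = q^3 - 1"
proof -
  have "(\<Sum>w\<in>D. Bc w) = (\<Sum>w\<in>D. \<Sum>t\<in>{t\<in>UNIV-{0::'a}. tau t = w}. 1)"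
    by (simp add: Bc_def)
  also have "\<dots> = (\<Sum>t\<in>UNIV-{0::'a}. 1)"
    by (rule sum.group) (simp_all add: image_subset_iff tau_D)
  also have "\<dots> = q^3 - 1" using cardU Q_eq by (simp add: card_Diff_singleton)
  finally show ?thesis .
qed

lemma card_root_set: "r \<in> Fs \<Longrightarrow> card {w\<in>D. fw w r = 0} = q * (q - 1)"
proof -
  assume r: "r \<in> Fs"
  have r0: "r \<noteq> 0" and rF: "r \<in> Fq m" using r by (auto simp: Fs_iff)
  let ?E = "\<lambda>u n. (n - r^3 + u*r^2) / r"
  have "bij_betw (\<lambda>p. (fst p, ?E (fst p) (snd p), snd p)) ((Fq m::'a set) \<times> Fs) {w\<in>D. fw w r = 0}"
  proof (rule bij_betw_byWitness[where f'="\<lambda>w. (fst w, snd (snd w))"])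
    show "\<forall>p\<in>(Fq m::'a set) \<times> Fs. (fst (fst p, ?E (fst p) (snd p), snd p), snd (snd (fst p, ?E (fst p) (snd p), snd p))) = p" by simp
    show "\<forall>w\<in>{w\<in>D. fw w r = 0}. (fst (fst w, snd (snd w)), ?E (fst (fst w, snd (snd w))) (snd (fst w, snd (snd w))), snd (fst w, snd (snd w))) = w"
    proof
      fix w assume w: "w \<in> {w\<in>D. fw w r = 0}"
      obtain u e n where wd: "w = (u,e,n)" by (cases w) auto
      have "r^3 - u*r^2 + e*r - n = 0" using w wd by (simp add: fw_def)
      then have "e = ?E u n" using r0 by (simp add: field_simps power2_eq_square power3_eq_cube)
      then show "(fst (fst w, snd (snd w)), ?E (fst (fst w, snd (snd w))) (snd (fst w, snd (snd w))), snd (fst w, snd (snd w))) = w"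
        using wd by simp
    qed
    show "(\<lambda>p. (fst p, ?E (fst p) (snd p), snd p)) ` ((Fq m::'a set) \<times> Fs) \<subseteq> {w\<in>D. fw w r = 0}"
    proof
      fix w assume "w \<in> (\<lambda>p. (fst p, ?E (fst p) (snd p), snd p)) ` ((Fq m::'a set) \<times> Fs)"
      then obtain p where p: "p \<in> (Fq m::'a set) \<times> Fs" and wp: "w = (fst p, ?E (fst p) (snd p), snd p)" by auto
      have "?E (fst p) (snd p) \<in> Fq m" using p rF by (auto simp: Fs_iff intro!: Fdiv Fadd Fdiff Fmult Fpow)
      moreover have "fw (fst p, ?E (fst p) (snd p), snd p) r = 0" using r0
        by (simp add: fw_def field_simps power2_eq_square power3_eq_cube)
      ultimately show "w \<in> {w\<in>D. fw w r = 0}" using p wp by (auto simp: D_def)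
    qed
    show "(\<lambda>w. (fst w, snd (snd w))) ` {w\<in>D. fw w r = 0} \<subseteq> (Fq m::'a set) \<times> Fs"
      by (auto simp: D_def)
  qed
  then have "card {w\<in>D. fw w r = 0} = card ((Fq m::'a set) \<times> Fs)"
    by (simp add: bij_betw_same_card)
  then show ?thesis by (simp add: card_cartesian_product card_Fq card_Fs)
qed

lemma sum_Rc: "(\<Sum>w\<in>D. Rc w) = (q-1) * (q * (q - 1))"
proof -
  have "(\<Sum>w\<in>D. Rc w) = (\<Sum>w\<in>D. \<Sum>r\<in>{r\<in>Fq m. fw w r = 0}. 1)"
    by (simp add: Rc_def)
  also have "\<dots> = (\<Sum>r\<in>Fq m. \<Sum>w\<in>{w\<in>D. fw w r = 0}. 1)"
    by (rule sum.swap_restrict) auto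
  also have "\<dots> = (\<Sum>w\<in>{w\<in>D. fw w 0 = 0}. 1) + (\<Sum>r\<in>Fs. \<Sum>w\<in>{w\<in>D. fw w r = 0}. (1::nat))"
    unfolding Fs_def
    by (rule sum.remove[where x="0::'a" and A="Fq m" and g="\<lambda>r. \<Sum>w\<in>{w\<in>D. fw w r = 0}. (1::nat)"]) auto
  also have "\<dots> = (\<Sum>r\<in>Fs. q * (q - 1))"
    by (simp add: G_0 card_root_set)
  also have "\<dots> = (q-1) * (q * (q - 1))" by (simp add: card_Fs)
  finally show ?thesis .
qed

lemma card_D: "card D = q * (q * (q - 1))"
  by (simp add: D_def card_cartesian_product card_Fq card_Fs)

end


lemma poly_id_nat: "(Q::nat) \<ge> 1 \<Longrightarrow> int ((Q-1)^3) + 3 * int (Q * (Q * (Q - 1))) - 3 * int ((Q-1) * (Q * (Q - 1))) - int (Q^3 - 1) = 0"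
proof -
  assume q1: "Q \<ge> 1"
  have q3: "Q^3 \<ge> 1" using q1 by simp
  have a1: "int ((Q-1)^3) = (int Q - 1)^3" using q1 by (simp add: of_nat_diff)
  have a2: "int (Q * (Q * (Q - 1))) = int Q * (int Q * (int Q - 1))" using q1 by (simp add: of_nat_diff)
  have a3: "int ((Q-1) * (Q * (Q - 1))) = (int Q - 1) * (int Q * (int Q - 1))" using q1 by (simp add: of_nat_diff)
  have a4: "int (Q^3 - 1) = int Q ^ 3 - 1" using q3 by (simp add: of_nat_diff)
  show ?thesis unfolding a1 a2 a3 a4 by (simp add: power3_eq_cube algebra_simps)
qed
context kl
begin

abbreviation Bset where "Bset w \<equiv> {t\<in>UNIV-{0::'a}. tau t = w}"
abbreviation Rset where "Rset w \<equiv> {r\<in>(Fq m::'a set). fw w r = 0}"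
abbreviation Sset where "Sset w \<equiv> {p\<in>Fs\<times>Fs\<times>Fs. sig p = w}"

lemma poly_id: "(Q-1)^3 + 3*(Q*(Q*(Q-1))) - 3*((Q-1)*(Q*(Q-1))) - (Q^3-1) = (0::int)"
  by (simp add: power3_eq_cube algebra_simps)

lemma B_poly: "t \<in> Bset w \<Longrightarrow> fw w X = (X - t)*(X - t^q)*(X - t^(q^2))"
  by (auto simp: tau_def fw_def char_poly)

lemma Bc_le3: "Bc w \<le> 3"
proof (cases "Bset w = {}")
  case True then show ?thesis unfolding Bc_def True by simp
next
  case False then obtain t0 where t0: "t0 \<in> Bset w" by blast
  have "Bset w \<subseteq> {t0, t0^q, t0^(q^2)}"
  proof
    fix t assume t: "t \<in> Bset w"
    have "fw w t = 0" using B_poly[OF t, of t] by simp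
    then have "(t - t0)*(t - t0^q)*(t - t0^(q^2)) = 0" using B_poly[OF t0, of t] by simp
    then show "t \<in> {t0, t0^q, t0^(q^2)}" by auto
  qed
  then have "Bc w \<le> card {t0, t0^q, t0^(q^2)}" unfolding Bc_def by (intro card_mono) auto
  then show ?thesis using card3_le[of t0 "t0^q" "t0^(q^2)"] by linarith
qed

lemma B_in_F:
  assumes t0: "t0 \<in> Bset w" and r: "r \<in> Fq m" "fw w r = 0"
  shows "t0 = r"
proof -
  have "(r - t0)*(r - t0^q)*(r - t0^(q^2)) = 0" using B_poly[OF t0, of r] r by simp
  then have "r = t0 \<or> r = t0^q \<or> r = t0^(q^2)" by auto
  moreover have "r = t0^q \<Longrightarrow> t0 = r"
  proof -
    assume h: "r = t0^q"
    have "t0 = t0^(q^3)" using fermat by simp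
    also have "\<dots> = (t0^q)^(q^2)" by (simp add: power_mult[symmetric] power2_eq_square power3_eq_cube mult.assoc)
    also have "\<dots> = r" using h F_pow_q_pow[OF r(1), of 2] by simp
    finally show ?thesis .
  qed
  moreover have "r = t0^(q^2) \<Longrightarrow> t0 = r"
    using fq2[of t0] r(1) by (simp add: Fq_iff)
  ultimately show ?thesis by blast
qed

lemma caseB:
  assumes t0: "t0 \<in> Bset w" and r: "r \<in> Rset w"
  shows "Bc w \<le> 1" "Rc w = 1" "1 \<le> Sc w"
proof -
  have tr: "t0 = r" using B_in_F[OF t0] r by auto
  have "Bset w \<subseteq> {r}" using B_in_F r by auto
  then have "Bc w \<le> card {r}" unfolding Bc_def by (intro card_mono) auto
  then show "Bc w \<le> 1" by simp
  have "Rset w = {r}" using B_in_F[OF t0] r tr by auto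
  then show "Rc w = 1" by (simp add: Rc_def)
  have rF: "r \<in> Fq m" and r0: "r \<noteq> 0" using r t0 tr by auto
  have rq: "r^q = r" and rq2: "r^(q^2) = r" using rF F_pow_q_pow[OF rF, of 2] by (auto simp: Fq_iff)
  have "tau r = w" using t0 tr by simp
  then have "sig (r,r,r) = w" by (simp add: tau_def sig_def rel_tr_def E2_def Nm_def rq rq2)
  then have "(r,r,r) \<in> Sset w" using rF r0 by (simp add: Fs_iff)
  then have "Sset w \<noteq> {}" by blast
  then show "1 \<le> Sc w" unfolding Sc_def by (simp add: Suc_le_eq card_gt_0_iff)
qed

lemma caseR2:
  assumes w: "w \<in> D" and r1: "r1 \<in> Rset w" and r2: "r2 \<in> Rset w" and ne: "r1 \<noteq> r2"
  shows "3 * Rc w \<le> Sc w + 3"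
proof -
  obtain u e n where wd: "w = (u,e,n)" by (cases w) auto
  have uF: "u \<in> Fq m" and nF: "n \<in> Fq m" and n0: "n \<noteq> 0" using w wd by (auto simp: D_def Fs_iff)
  have f1: "r1^3 - u*r1^2 + e*r1 - n = 0" using r1 wd by (simp add: fw_def)
  have f2: "r2^3 - u*r2^2 + e*r2 - n = 0" using r2 wd by (simp add: fw_def)
  have "(r1 - r2) * (r1^2 + r1*r2 + r2^2 - u*(r1+r2) + e) = (r1^3 - u*r1^2 + e*r1 - n) - (r2^3 - u*r2^2 + e*r2 - n)"
    by (simp add: algebra_simps power2_eq_square power3_eq_cube)
  then have "(r1 - r2) * (r1^2 + r1*r2 + r2^2 - u*(r1+r2) + e) = 0" using f1 f2 by simp
  then have X0: "r1^2 + r1*r2 + r2^2 - u*(r1+r2) + e = 0" using ne by (metis mult_eq_0_iff right_minus_eq)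
  have "e = (r1^2 + r1*r2 + r2^2 - u*(r1+r2) + e) - (r1^2 + r1*r2 + r2^2 - u*(r1+r2))" by simp
  also have "\<dots> = 0 - (r1^2 + r1*r2 + r2^2 - u*(r1+r2))" by (simp only: X0)
  also have "\<dots> = u*(r1+r2) - r1^2 - r1*r2 - r2^2" by (simp add: algebra_simps)
  finally have eE: "e = u*(r1+r2) - r1^2 - r1*r2 - r2^2" .
  define s where "s = u - r1 - r2"
  have uS: "u = r1 + r2 + s" by (simp add: s_def)
  have eS: "e = r1*r2 + r2*s + s*r1" using eE by (simp add: s_def algebra_simps power2_eq_square)
  have nS: "n = r1*r2*s" using f1 eS uS by (simp add: algebra_simps power2_eq_square power3_eq_cube)
  have fX: "fw w X = (X - r1)*(X - r2)*(X - s)" for X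
    using wd uS eS nS by (simp add: fw_def cubic_id)
  have r1F: "r1 \<in> Fq m" and r2F: "r2 \<in> Fq m" using r1 r2 by auto
  have sF: "s \<in> Fq m" using uF r1F r2F by (simp add: s_def Fdiff)
  have nz: "r1 \<noteq> 0" "r2 \<noteq> 0" "s \<noteq> 0" using n0 nS by auto
  have Fs3: "r1 \<in> Fs" "r2 \<in> Fs" "s \<in> Fs" using r1F r2F sF nz by (auto simp: Fs_iff)
  have Rsub: "Rset w \<subseteq> {r1, r2, s}" using fX by auto
  have sg: "sig (r1,r2,s) = w" "sig (r2,s,r1) = w" "sig (s,r1,r2) = w"
      "sig (r2,r1,s) = w" "sig (r1,s,r2) = w" "sig (s,r2,r1) = w"
    by (simp_all add: sig_def wd uS eS nS algebra_simps)
  have cyc: "{(r1,r2,s), (r2,s,r1), (s,r1,r2)} \<subseteq> Sset w"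
    using Fs3 sg by simp
  have ne': "r2 \<noteq> r1" using ne by simp
  have ccyc: "card {(r1,r2,s), (r2,s,r1), (s,r1,r2)} = 3" using ne ne' by (simp add: card_insert_if)
  show ?thesis
  proof (cases "s = r1 \<or> s = r2")
    case True
    then have "Rset w \<subseteq> {r1, r2}" using Rsub by auto
    then have "Rc w \<le> card {r1, r2}" unfolding Rc_def by (intro card_mono) auto
    moreover have "card {r1, r2} \<le> 2" by (simp add: card_insert_if)
    ultimately have "Rc w \<le> 2" by linarith
    moreover have "3 \<le> Sc w" unfolding Sc_def using card_mono[OF _ cyc] ccyc by simp
    ultimately show ?thesis by simp
  next
    case False
    have "Rc w \<le> card {r1, r2, s}" unfolding Rc_def using Rsub by (intro card_mono) auto
    then have "Rc w \<le> 3" using card3_le[of r1 r2 s] by linarith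
    have six: "{(r1,r2,s), (r2,s,r1), (s,r1,r2), (r2,r1,s), (r1,s,r2), (s,r2,r1)} \<subseteq> Sset w"
      using Fs3 sg by simp
    have d: "s \<noteq> r1" "s \<noteq> r2" "r1 \<noteq> s" "r2 \<noteq> s" using False by auto
    have csix: "card {(r1,r2,s), (r2,s,r1), (s,r1,r2), (r2,r1,s), (r1,s,r2), (s,r2,r1)} = 6"
      using ne ne' d by (simp add: card_insert_if)
    have "6 \<le> Sc w" unfolding Sc_def using card_mono[OF _ six] csix by simp
    with \<open>Rc w \<le> 3\<close> show ?thesis by simp
  qed
qed

lemma pointwise_nonneg: "w \<in> D \<Longrightarrow> int (Bc w) \<le> int (Sc w) + 3 - 3 * int (Rc w)"
proof -
  assume w: "w \<in> D"
  show ?thesis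
  proof (cases "Rset w = {}")
    case True
    then have "Rc w = 0" by (simp add: Rc_def)
    then show ?thesis using Bc_le3[of w] by simp
  next
    case False
    then obtain r1 where r1: "r1 \<in> Rset w" by blast
    show ?thesis
    proof (cases "Bset w = {}")
      case False
      then obtain t0 where "t0 \<in> Bset w" by blast
      from caseB[OF this r1] show ?thesis by simp
    next
      case True
      then have B0: "Bc w = 0" by (simp add: Bc_def)
      show ?thesis
      proof (cases "Rset w = {r1}")
        case True
        then have "Rc w = 1" by (simp add: Rc_def)
        then show ?thesis using B0 by simp
      next
        case False
        then obtain r2 where r2: "r2 \<in> Rset w" "r2 \<noteq> r1" using r1 by blast
        from caseR2[OF w r1 r2(1)] r2(2) show ?thesis using B0 by simp
      qed
    qed
  qed
qed

lemma pointwise: "w \<in> D \<Longrightarrow> int (Bc w) = int (Sc w) + 3 - 3 * int (Rc w)"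
proof -
  let ?P = "\<lambda>w. int (Sc w) + 3 - 3 * int (Rc w) - int (Bc w)"
  have "(\<Sum>w\<in>D. ?P w) = int (\<Sum>w\<in>D. Sc w) + 3 * int (card D) - 3 * int (\<Sum>w\<in>D. Rc w) - int (\<Sum>w\<in>D. Bc w)"
  proof -
    have s1: "(\<Sum>w\<in>D. ?P w) = (\<Sum>w\<in>D. int (Sc w)) + (\<Sum>w\<in>D. 3) - (\<Sum>w\<in>D. 3 * int (Rc w)) - (\<Sum>w\<in>D. int (Bc w))"
      by (simp only: sum_subtractf sum.distrib)
    have s2: "(\<Sum>w\<in>D. (3::int)) = 3 * int (card D)" by simp
    have s3: "(\<Sum>w\<in>D. 3 * int (Rc w)) = 3 * int (\<Sum>w\<in>D. Rc w)"
      by (simp only: sum_distrib_left[symmetric] of_nat_sum)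
    have s4: "(\<Sum>w\<in>D. int (Sc w)) = int (\<Sum>w\<in>D. Sc w)" by (simp only: of_nat_sum)
    have s5: "(\<Sum>w\<in>D. int (Bc w)) = int (\<Sum>w\<in>D. Bc w)" by (simp only: of_nat_sum)
    show ?thesis unfolding s1 s2 s3 s4 s5 ..
  qed
  also have "\<dots> = 0"
  proof -
    have q1: "q \<ge> 1" using q_gt by simp
    have "int ((q-1)^3) + 3 * int (q * (q * (q - 1))) - 3 * int ((q-1) * (q * (q - 1))) - int (q^3 - 1) = 0"
      by (rule poly_id_nat[OF q1])
    then show ?thesis unfolding sum_Sc card_D sum_Rc sum_Bc .
  qed
  finally have S0: "(\<Sum>w\<in>D. ?P w) = 0" .
  have nn: "0 \<le> ?P w" if "w \<in> D" for w
    using pointwise_nonneg[OF that] by linarith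
  have iff: "(\<Sum>w\<in>D. ?P w) = 0 \<longleftrightarrow> (\<forall>w\<in>D. ?P w = 0)"
    by (rule sum_nonneg_eq_0_iff[OF finite_D nn])
  assume w: "w \<in> D"
  then have "?P w = 0" using iff S0 by blast
  then show "int (Bc w) = int (Sc w) + 3 - 3 * int (Rc w)" by linarith
qed

lemma Kstd3_eq: "Kstd3 = Kstd^3 - 3 * of_nat q * Kstd"
proof -
  have "Kstd3 = (\<Sum>w\<in>D. of_nat (Bc w) * Lam w)" by (rule stepC)
  also have "\<dots> = (\<Sum>w\<in>D. of_nat (Sc w) * Lam w - 3 * (of_nat (Rc w) * Lam w) + 3 * Lam w)"
  proof (rule sum.cong[OF refl])
    fix w assume "w \<in> D"
    then have "int (Bc w) = int (Sc w) + 3 - 3 * int (Rc w)" by (rule pointwise)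
    then have "(of_int (int (Bc w)) :: complex) = of_int (int (Sc w) + 3 - 3 * int (Rc w))" by simp
    then have eqB: "(of_nat (Bc w) :: complex) = of_nat (Sc w) + 3 - 3 * of_nat (Rc w)" by simp
    show "of_nat (Bc w) * Lam w = of_nat (Sc w) * Lam w - 3 * (of_nat (Rc w) * Lam w) + 3 * Lam w"
      unfolding eqB by (simp add: algebra_simps)
  qed
  also have "\<dots> = (\<Sum>w\<in>D. of_nat (Sc w) * Lam w) - 3 * (\<Sum>w\<in>D. of_nat (Rc w) * Lam w) + 3 * (\<Sum>w\<in>D. Lam w)"
    by (simp add: sum.distrib sum_subtractf sum_distrib_left)
  also have "\<dots> = Kstd^3 - 3 * of_nat q * Kstd"
    using stepA stepB stepD stepE by simp
  finally show ?thesis .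
qed

end


lemma pow3_int: "pow3_dvd k (of_int z) \<longleftrightarrow> (3::int)^k dvd z"
proof
  assume "pow3_dvd k (of_int z)"
  then obtain u v :: int where e: "of_int z = 3 ^ k * (of_int u + of_int v * omega)"
    unfolding pow3_dvd_def by blast
  have "Im (of_int z :: complex) = 3 ^ k * (of_int v * Im omega)"
    using arg_cong[OF e, of Im] by simp
  then have "v = 0" using omega_Im by simp
  then have "(of_int z :: complex) = of_int (3 ^ k * u)" using e by simp
  then have "z = 3^k * u" by (simp only: of_int_eq_iff)
  then show "(3::int)^k dvd z" by simp
next
  assume "(3::int)^k dvd z"
  then obtain c where "z = 3^k * c" by (auto elim: dvdE)
  then show "pow3_dvd k (of_int z)" unfolding pow3_dvd_def
    by (intro exI[of _ c] exI[of _ 0]) simp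
qed

lemma greatest3:
  assumes "z \<noteq> 0" "(3::int)^v dvd z" "\<not> (3::int)^(Suc v) dvd z"
  shows "(GREATEST k. pow3_dvd k (of_int z)) = v"
proof (rule Greatest_equality)
  show "pow3_dvd v (of_int z)" using assms(2) by (simp add: pow3_int)
  fix y assume "pow3_dvd y (of_int z)"
  then have y: "(3::int)^y dvd z" by (simp add: pow3_int)
  show "y \<le> v"
  proof (rule ccontr)
    assume "\<not> y \<le> v"
    then have "(3::int)^(Suc v) dvd 3^y" by (intro le_imp_power_dvd) simp
    then show False using y assms(3) dvd_trans by blast
  qed
qed

context kl
begin

lemma q_ge: "q > 2" using q_gt by simp

lemma Kl_eq: "Kl m a = 1 + Kstd"
proof -
  have "Kl m a = chi3 (abs_tr m (0 + a * 0 ^ (3 ^ m - 2))) + (\<Sum>x\<in>Fq m - {0}. chi3 (abs_tr m (x + a * x ^ (3 ^ m - 2))))"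
    unfolding Kl_def
    by (rule sum.remove[where x="0::'a" and A="Fq m" and g="\<lambda>x. chi3 (abs_tr m (x + a * x ^ (3 ^ m - 2)))"]) auto
  also have "chi3 (abs_tr m (0 + a * (0::'a) ^ (3 ^ m - 2))) = 1"
  proof -
    have z: "(0::'a) ^ (3^m - 2) = 0" using q_ge by (simp add: power_0_left)
    show ?thesis by (simp only: z mult_zero_right add_0 tr_zero chi3_0)
  qed
  also have "(\<Sum>x\<in>Fq m - {0}. chi3 (abs_tr m (x + a * x ^ (3 ^ m - 2)))) = Kstd"
    unfolding Kstd_def Fs_def psi_def
    by (rule sum.cong[OF refl]) (simp add: Finv_pow)
  finally show ?thesis .
qed

lemma Kl3_eq: "Kl3 m a = 1 + Kstd3"
proof -
  have "Kl3 m a = chi3 (abs_tr m (rel_tr (3 ^ m) (0 + a * 0 ^ (3 ^ (3 * m) - 2))))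
     + (\<Sum>x\<in>UNIV - {0}. chi3 (abs_tr m (rel_tr (3 ^ m) (x + a * x ^ (3 ^ (3 * m) - 2)))))"
    unfolding Kl3_def
    by (rule sum.remove[where x="0::'a" and A="UNIV" and g="\<lambda>x. chi3 (abs_tr m (rel_tr (3 ^ m) (x + a * x ^ (3 ^ (3 * m) - 2))))"]) auto
  also have "chi3 (abs_tr m (rel_tr (3 ^ m) (0 + a * (0::'a) ^ (3 ^ (3 * m) - 2)))) = 1"
  proof -
    have "(3::nat)^1 \<le> 3^(3*m)" using m2 by (intro power_increasing) auto
    then have z: "(0::'a) ^ (3 ^ (3 * m) - 2) = 0" by simp
    have r0: "rel_tr (3^m) (0::'a) = 0" by (simp add: rel_tr_def power_0_left)
    show ?thesis by (simp only: z r0 mult_zero_right add_0 tr_zero chi3_0)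
  qed
  also have "(\<Sum>x\<in>UNIV - {0}. chi3 (abs_tr m (rel_tr (3 ^ m) (x + a * x ^ (3 ^ (3 * m) - 2))))) = Kstd3"
    unfolding Kstd3_def psi_def
    by (rule sum.cong[OF refl]) (simp add: inv_pow_Q T_add T_smul[OF aF])
  finally show ?thesis .
qed

end


context kl
begin

definition hh :: "'a \<Rightarrow> 'a" where "hh x = x + a * x ^ (3^m - 2)"
definition NN :: "'a \<Rightarrow> nat" where "NN s = card {x\<in>(Fq m::'a set). abs_tr m (hh x) = s}"

lemma hh_F: "(x::'a) \<in> Fq m \<Longrightarrow> hh x \<in> Fq m"
  unfolding hh_def using aF by (intro Fadd Fmult Fpow)

lemma odd_q2: "odd (q - 2)"
  using q_ge by simp

lemma hh_neg: "hh (-x) = - hh x"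
  unfolding hh_def using odd_q2 by (simp add: power_minus_odd)

lemma vals_distinct: "(0::'a) \<noteq> 1" "(0::'a) \<noteq> -1" "(1::'a) \<noteq> -1"
  using one_ne_neg1 by auto

lemma Kl_counts: "Kl m a = of_nat (NN 0) + of_nat (NN 1) * omega + of_nat (NN (-1)) * omega^2"
proof -
  have "Kl m a = (\<Sum>x\<in>(Fq m::'a set). chi3 (abs_tr m (hh x)))"
    by (simp add: Kl_def hh_def)
  also have "\<dots> = (\<Sum>s\<in>{0::'a,1,-1}. \<Sum>x\<in>{x\<in>(Fq m::'a set). abs_tr m (hh x) = s}. chi3 (abs_tr m (hh x)))"
    by (rule sum.group[symmetric, OF finite_F]) (use tr_vals hh_F in auto)
  also have "\<dots> = (\<Sum>s\<in>{0::'a,1,-1}. of_nat (NN s) * chi3 s)"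
  proof (rule sum.cong[OF refl])
    fix s assume s: "s \<in> {0::'a,1,-1}"
    have "(\<Sum>x\<in>{x\<in>(Fq m::'a set). abs_tr m (hh x) = s}. chi3 (abs_tr m (hh x)))
        = (\<Sum>x\<in>{x\<in>(Fq m::'a set). abs_tr m (hh x) = s}. chi3 s)"
      by (rule sum.cong) auto
    then show "(\<Sum>x\<in>{x\<in>(Fq m::'a set). abs_tr m (hh x) = s}. chi3 (abs_tr m (hh x))) = of_nat (NN s) * chi3 s"
      by (simp add: NN_def)
  qed
  also have "\<dots> = of_nat (NN 0) + of_nat (NN 1) * omega + of_nat (NN (-1)) * omega^2"
    using vals_distinct by (simp add: chi3_0 chi3_1 chi3_m1 algebra_simps)
  finally show ?thesis .
qed

lemma N_sym: "NN 1 = NN (-1)"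
  unfolding NN_def
proof (rule bij_betw_same_card[of uminus], rule bij_betw_byWitness[where f'=uminus])
  show "\<forall>x\<in>{x \<in> (Fq m::'a set). abs_tr m (hh x) = 1}. - (- x) = x" by simp
  show "\<forall>x\<in>{x \<in> (Fq m::'a set). abs_tr m (hh x) = -1}. - (- x) = x" by simp
  show "uminus ` {x \<in> (Fq m::'a set). abs_tr m (hh x) = 1} \<subseteq> {x \<in> Fq m. abs_tr m (hh x) = -1}"
    by (auto simp: hh_neg tr_neg Fneg)
  show "uminus ` {x \<in> (Fq m::'a set). abs_tr m (hh x) = -1} \<subseteq> {x \<in> Fq m. abs_tr m (hh x) = 1}"
    by (auto simp: hh_neg tr_neg Fneg)
qed

lemma N_total: "NN 0 + NN 1 + NN (-1) = q"
proof -
  have "q = (\<Sum>x\<in>(Fq m::'a set). 1::nat)" using card_Fq by simp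
  also have "\<dots> = (\<Sum>s\<in>{0::'a,1,-1}. \<Sum>x\<in>{x\<in>(Fq m::'a set). abs_tr m (hh x) = s}. 1::nat)"
    by (rule sum.group[symmetric, OF finite_F]) (use tr_vals hh_F in auto)
  also have "\<dots> = NN 0 + NN 1 + NN (-1)"
    using vals_distinct by (simp add: NN_def)
  finally show ?thesis by simp
qed

lemma preimage_le2: "card {x\<in>(Fq m::'a set) - {0}. hh x = y} \<le> 2"
proof -
  have "{x\<in>(Fq m::'a set) - {0}. hh x = y} \<subseteq> {x. x^2 + poly [:a, -y:] x = 0}"
  proof
    fix x assume x: "x \<in> {x\<in>(Fq m::'a set) - {0}. hh x = y}"
    then have x0: "x \<noteq> 0" and xF: "x \<in> Fq m" and hx: "x + a * inverse x = y"
      using Finv_pow[of x] by (auto simp: hh_def)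
    have "x * (x + a * inverse x) = x * y" using hx by simp
    then have "x^2 + a = x * y" using x0 by (simp add: algebra_simps power2_eq_square)
    then show "x \<in> {x. x^2 + poly [:a, -y:] x = 0}" by (simp add: algebra_simps)
  qed
  then have "card {x\<in>(Fq m::'a set) - {0}. hh x = y} \<le> card {x. x^2 + poly [:a, -y:] x = 0}"
    by (intro card_mono) auto
  also have "\<dots> \<le> 2" by (rule root_bound) simp
  finally show ?thesis .
qed

lemma N0_bound: "NN 0 \<le> 1 + 2 * 3^(m-1)"
proof -
  let ?K = "{y\<in>(Fq m::'a set). abs_tr m y = 0}"
  have "{x\<in>(Fq m::'a set). abs_tr m (hh x) = 0} \<subseteq> insert 0 (\<Union>y\<in>?K. {x\<in>(Fq m::'a set) - {0}. hh x = y})"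
    using hh_F by auto
  then have "NN 0 \<le> card (insert 0 (\<Union>y\<in>?K. {x\<in>(Fq m::'a set) - {0}. hh x = y}))"
    unfolding NN_def by (intro card_mono) auto
  also have "\<dots> \<le> Suc (card (\<Union>y\<in>?K. {x\<in>(Fq m::'a set) - {0}. hh x = y}))"
    by (rule card_insert_le_m1) simp_all
  also have "card (\<Union>y\<in>?K. {x\<in>(Fq m::'a set) - {0}. hh x = y}) \<le> (\<Sum>y\<in>?K. card {x\<in>(Fq m::'a set) - {0}. hh x = y})"
    by (rule card_UN_le) simp
  also have "\<dots> \<le> (\<Sum>y\<in>?K. 2)" by (intro sum_mono preimage_le2)
  also have "\<dots> = 2 * 3^(m-1)" using card_ker_tr_eq by simp
  finally show ?thesis by simp
qed

lemma N0_lt: "NN 0 < q"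
proof -
  have mm: "(3::nat)^m = 3 * 3^(m-1)" using m2
    by (metis Suc_diff_1 power_Suc less_le_trans numeral_2_eq_2 zero_less_Suc)
  have "(1::nat) < 3^(m-1)" using m2 by (intro one_less_power) auto
  then show ?thesis using N0_bound mm by simp
qed

lemma Kl_int: "\<exists>k::int. Kl m a = of_int k \<and> 3 dvd k \<and> (k \<noteq> 0 \<longrightarrow> \<not> 3^m dvd k)"
proof -
  define k where "k = int (NN 0) - int (NN 1)"
  have "Kl m a = of_nat (NN 0) + of_nat (NN 1) * (omega + omega^2)"
    using Kl_counts N_sym by (simp add: algebra_simps)
  also have "omega + omega^2 = -1"
  proof -
    have "omega + omega^2 = (1 + omega + omega^2) - 1" by simp
    then show ?thesis using omega_sum by simp
  qed
  finally have K: "Kl m a = of_int k" by (simp add: k_def)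
  have tot: "int (NN 0) + 2 * int (NN 1) = 3^m" using N_total N_sym
    by (metis of_nat_add of_nat_numeral of_nat_power mult_2 add.assoc)
  have "k = 3^m - 3 * int (NN 1)" using tot by (simp add: k_def)
  moreover have "(3::int) dvd 3^m" using m2 by simp
  ultimately have d3: "3 dvd k" by simp
  have lt: "int (NN 0) < 3^m" using N0_lt by (metis of_nat_less_iff of_nat_numeral of_nat_power)
  have pos: "(0::int) < 3^m" by simp
  have bnd: "\<bar>k\<bar> < 3^m" unfolding abs_less_iff k_def using tot lt pos by linarith
  have "k \<noteq> 0 \<longrightarrow> \<not> 3^m dvd k"
  proof
    assume "k \<noteq> 0"
    show "\<not> 3^m dvd k"
    proof
      assume "3^m dvd k"
      then have "\<bar>3^m\<bar> \<le> \<bar>k\<bar>" using \<open>k \<noteq> 0\<close> by (rule dvd_imp_le_int[rotated])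
      then show False using bnd by simp
    qed
  qed
  then show ?thesis using K d3 by blast
qed

end


lemma val_step:
  fixes k :: int and v m :: nat
  assumes dv: "3^v dvd k" and ndv: "\<not> 3^(Suc v) dvd k" and v1: "1 \<le> v" and vm: "v < m"
  defines "k3 \<equiv> 1 + (k-1)^3 - 3 * 3^m * (k-1)"
  shows "3^(Suc v) dvd k3" "\<not> 3^(Suc (Suc v)) dvd k3"
proof -
  have e: "k3 - 3*k = k^3 - 3*k^2 - 3*3^m*k + 3*3^m"
    by (simp add: k3_def algebra_simps power2_eq_square power3_eq_cube)
  have t1: "3^(Suc (Suc v)) dvd k^3"
  proof -
    have "(3::int)^(Suc (Suc v)) dvd 3^(3*v)" using v1 by (intro le_imp_power_dvd) simp
    moreover have "(3::int)^(3*v) dvd k^3" using dvd_power_same[OF dv, of 3]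
      by (simp add: power_mult[symmetric] mult.commute)
    ultimately show ?thesis by (rule dvd_trans)
  qed
  have t2: "3^(Suc (Suc v)) dvd 3*k^2"
  proof -
    have "(3::int)^(Suc v) dvd 3^(2*v)" using v1 by (intro le_imp_power_dvd) simp
    moreover have "(3::int)^(2*v) dvd k^2" using dvd_power_same[OF dv, of 2]
      by (simp add: power_mult[symmetric] mult.commute)
    ultimately have "(3::int)^(Suc v) dvd k^2" by (rule dvd_trans)
    then have "3 * (3::int)^(Suc v) dvd 3 * k^2" by (rule mult_dvd_mono[OF dvd_refl])
    then show ?thesis by simp
  qed
  have t4: "3^(Suc (Suc v)) dvd (3 * 3^m :: int)"
  proof -
    have "(3::int)^(Suc (Suc v)) dvd 3^(Suc m)" using vm by (intro le_imp_power_dvd) simp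
    then show ?thesis by simp
  qed
  have t3: "3^(Suc (Suc v)) dvd 3*3^m*k" using t4 by (rule dvd_mult2)
  have A: "3^(Suc (Suc v)) dvd (k3 - 3*k)"
    unfolding e using t1 t2 t3 t4 by (intro dvd_add dvd_diff)
  have B: "3^(Suc v) dvd 3*k"
  proof -
    have "3 * (3::int)^v dvd 3 * k" using dv by (rule mult_dvd_mono[OF dvd_refl])
    then show ?thesis by simp
  qed
  have A': "3^(Suc v) dvd (k3 - 3*k)"
    using A by (rule dvd_trans[rotated]) (simp add: le_imp_power_dvd)
  have "k3 = 3*k + (k3 - 3*k)" by simp
  then show "3^(Suc v) dvd k3" using B A' by (metis dvd_add)
  show "\<not> 3^(Suc (Suc v)) dvd k3"
  proof
    assume h: "3^(Suc (Suc v)) dvd k3"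
    have "3*k = k3 - (k3 - 3*k)" by simp
    then have "3^(Suc (Suc v)) dvd 3*k" using h A by (metis dvd_diff)
    then have "3 * 3^(Suc v) dvd 3 * k" by simp
    then have "3^(Suc v) dvd k" by (subst (asm) dvd_times_left_cancel_iff) simp_all
    then show False using ndv by simp
  qed
qed

theorem mainTheorem6:
  fixes a :: "'a::{field,finite}" and m :: nat
  assumes "card (UNIV :: 'a set) = 3 ^ (3 * m)"
    and "m \<ge> 2"
    and "a \<in> Fq m"
    and "a \<noteq> 0"
  shows "H3 m a = H m a + 1"
proof -
  interpret kl m a using assms by unfold_locales auto
  obtain k where K: "Kl m a = of_int k" "3 dvd k" "k \<noteq> 0 \<longrightarrow> \<not> 3^m dvd k" using Kl_int by blast
  have Kstd_eq: "Kstd = of_int (k - 1)" using Kl_eq K(1) by (simp add: eq_diff_eq add.commute)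
  define k3 where "k3 = 1 + (k-1)^3 - 3 * 3^m * (k-1)"
  have K3: "Kl3 m a = of_int k3" using Kl3_eq Kstd3_eq Kstd_eq by (simp add: k3_def)
  show ?thesis
  proof (cases "k = 0")
    case True
    then have Kl0: "Kl m a = 0" using K by simp
    have H: "H m a = m" by (simp add: H_def Kl0)
    have k3v: "k3 = 3^(Suc m)" using True by (simp add: k3_def)
    have nz: "Kl3 m a \<noteq> 0" using K3 k3v by simp
    have "H3 m a = (GREATEST j. pow3_dvd j (of_int k3))" using nz K3 by (simp add: H3_def)
    also have "\<dots> = Suc m"
    proof (rule greatest3)
      show "k3 \<noteq> 0" using k3v by simp
      show "(3::int)^(Suc m) dvd k3" using k3v by simp
      show "\<not> (3::int)^(Suc (Suc m)) dvd k3"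
      proof
        assume "(3::int)^(Suc (Suc m)) dvd k3"
        then have "\<bar>(3::int)^(Suc (Suc m))\<bar> \<le> \<bar>3^(Suc m)\<bar>" using k3v by (intro dvd_imp_le_int) simp_all
        then show False by simp
      qed
    qed
    finally show ?thesis using H by simp
  next
    case False
    define v where "v = multiplicity 3 k"
    have nu: "\<not> is_unit (3::int)" by simp
    have dv: "3^v dvd k" by (simp add: v_def multiplicity_dvd)
    have ndv: "\<not> 3^(Suc v) dvd k" using power_dvd_iff_le_multiplicity[OF False nu, of "Suc v"] v_def by simp
    have v1: "1 \<le> v" using power_dvd_iff_le_multiplicity[OF False nu, of 1] K(2) v_def by simp
    have vm: "v < m"
    proof (rule ccontr)
      assume "\<not> v < m"
      then have "(3::int)^m dvd 3^v" by (intro le_imp_power_dvd) simp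
      then have "3^m dvd k" using dv by (rule dvd_trans)
      then show False using K(3) False by simp
    qed
    have Knz: "Kl m a \<noteq> 0" using K(1) False by simp
    have H: "H m a = v"
      using Knz K(1) greatest3[OF False dv ndv] by (simp add: H_def)
    have s1: "3^(Suc v) dvd k3" and s2: "\<not> 3^(Suc (Suc v)) dvd k3"
      using val_step[OF dv ndv v1 vm] by (simp_all add: k3_def)
    have k3nz: "k3 \<noteq> 0" using s2 by auto
    have nz: "Kl3 m a \<noteq> 0" using K3 k3nz by simp
    have "H3 m a = (GREATEST j. pow3_dvd j (of_int k3))" using nz K3 by (simp add: H3_def)
    also have "\<dots> = Suc v" by (rule greatest3[OF k3nz s1 s2])
    finally show ?thesis using H by simp
  qed
qed


end
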